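(* Let $H(u,v,z,t)=\sum_w u^{\mathrm{asc}(w)}v^{\mathrm{last}(w)}z^{\mathrm{zeros}(w)}t^{\mathrm{length}(w)}$, summed over all nonempty ascent sequences $w$. Then $$(v-1-tv(1-u))\,H(u,v,z,t)=tz(v-1)+t(z(v-1)-v)\,H(u,1,z,t)+tuv^2\,H(uv,1,z,t).$$
   Context: An ascent sequence of length $n$ is a sequence $(x_1,\dots,x_n)$ of nonnegative integers with $x_1=0$ and $x_i\in[0,1+\mathrm{asc}(x_1,\dots,x_{i-1})]$ for $2\le i\le n$, where $\mathrm{asc}(y_1,\dots,y_k)=|\{1\le j<k: y_j<y_{j+1}\}|$. For an ascent sequence $w$: $\mathrm{length}(w)$ is its number of entries, $\mathrm{asc}(w)$ its number of ascents, $\mathrm{last}(w)$ its rightmost entry, $\mathrm{zeros}(w)$ its number of entries equal to 0. $H$ is a formal power series in $t$ with polynomial coefficients in $u,v,z$; $H(u,1,z,t)$ and $H(uv,1,z,t)$ denote the substitutions $v\mapsto1$ and $(u,v)\mapsto(uv,1)$. *)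

theory Defs
  imports Main "HOL-Computational_Algebra.Formal_Power_Series"
begin

text \<open>Sequences are 0-indexed lists of naturals: entry x_(i+1) of the paper is xs ! i.\<close>

definition asc :: "nat list \<Rightarrow> nat" where
  "asc xs = card {j. Suc j < length xs \<and> xs ! j < xs ! Suc j}"

definition ascent_seq :: "nat list \<Rightarrow> bool" where
  "ascent_seq xs \<longleftrightarrow> xs \<noteq> [] \<and> xs ! 0 = 0 \<and>
     (\<forall>i. 1 \<le> i \<and> i < length xs \<longrightarrow> xs ! i \<le> 1 + asc (take i xs))"

definition zeros :: "nat list \<Rightarrow> nat" where
  "zeros xs = length (filter (\<lambda>x. x = 0) xs)"

text \<open>Generating function H(u,v,z,t), with u v z elements of an arbitrary commutative ring
  (which subsumes the polynomial ring Z[u,v,z]); coefficient of t^n sums over ascent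
  sequences of length n (nonempty, so the constant coefficient is 0).\<close>

definition H :: "'a::comm_ring_1 \<Rightarrow> 'a \<Rightarrow> 'a \<Rightarrow> 'a fps" where
  "H u v z = Abs_fps (\<lambda>n. \<Sum>w\<in>{w. ascent_seq w \<and> length w = n}.
      u ^ asc w * v ^ last w * z ^ zeros w)"

end

theory Submission imports Defs begin

lemma P1:
  fixes u v z :: "'a::comm_ring_1"
  shows "m \<le> l \<Longrightarrow> (v - 1) * (\<Sum>x\<le>m. u^(a + (if l < x then 1 else 0)) * v^x * z^(k + (if x = 0 then 1 else 0)))
     = u^a*z^k*(z*(v-1) + v^(Suc m) - v)"
proof (induction m)
  case 0 then show ?case by (simp add: algebra_simps)
next
  case (Suc m)
  then have "(v - 1) * (\<Sum>x\<le>Suc m. u^(a + (if l < x then 1 else 0)) * v^x * z^(k + (if x = 0 then 1 else 0)))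
    = u^a*z^k*(z*(v-1) + v^(Suc m) - v) + (v - 1) * (u^a * v^(Suc m) * z^k)"
    by (simp add: distrib_left)
  also have "\<dots> = u^a*z^k*(z*(v-1) + v^(Suc (Suc m)) - v)" by (simp add: algebra_simps)
  finally show ?case .
qed

lemma P2:
  fixes u v z :: "'a::comm_ring_1"
  shows "l \<le> m \<Longrightarrow> (v - 1) * (\<Sum>x\<le>m. u^(a + (if l < x then 1 else 0)) * v^x * z^(k + (if x = 0 then 1 else 0)))
     = u^a*z^k*(z*(v-1) + v^(Suc l) - v) + u^(Suc a)*z^k*(v^(Suc m) - v^(Suc l))"
proof (induction m)
  case 0 then show ?case using P1[where m=0 and l=l and u=u and a=a and v=v and z=z and k=k] by simp
next
  case (Suc m)
  show ?case
  proof (cases "l = Suc m")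
    case True then show ?thesis using P1[where m="Suc m" and l=l and u=u and a=a and v=v and z=z and k=k] by simp
  next
    case False
    then have lm: "l \<le> m" using Suc.prems by simp
    then have "(v - 1) * (\<Sum>x\<le>Suc m. u^(a + (if l < x then 1 else 0)) * v^x * z^(k + (if x = 0 then 1 else 0)))
      = u^a*z^k*(z*(v-1) + v^(Suc l) - v) + u^(Suc a)*z^k*(v^(Suc m) - v^(Suc l)) + (v - 1) * (u^(Suc a) * v^(Suc m) * z^k)"
      using Suc.IH by (simp add: distrib_left)
    also have "\<dots> = u^a*z^k*(z*(v-1) + v^(Suc l) - v) + u^(Suc a)*z^k*(v^(Suc (Suc m)) - v^(Suc l))"
      by (simp add: algebra_simps)
    finally show ?thesis .
  qed
qed

lemma inner:
  fixes u v z :: "'a::comm_ring_1"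
  assumes "l \<le> a"
  shows "(v - 1) * (\<Sum>x\<le>Suc a. u^(a + (if l < x then 1 else 0)) * v^x * z^(k + (if x = 0 then 1 else 0)))
     = (z*(v-1) - v) * (u^a * 1^l * z^k) + v*(1-u) * (u^a * v^l * z^k) + u*v^2 * ((u*v)^a * 1^l * z^k)"
  using P2[where m="Suc a" and l=l and u=u and a=a and v=v and z=z and k=k] assms by (simp add: algebra_simps power_mult_distrib power2_eq_square)

lemma asc_snoc: "xs \<noteq> [] \<Longrightarrow> asc (xs@[x]) = asc xs + (if last xs < x then 1 else 0)"
proof -
  assume ne: "xs \<noteq> []"
  let ?A = "{j. Suc j < length xs \<and> xs ! j < xs ! Suc j}"
  have fin: "finite ?A" by (rule finite_subset[of _ "{..<length xs}"]) auto
  have eq: "{j. Suc j < length (xs@[x]) \<and> (xs@[x]) ! j < (xs@[x]) ! Suc j}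
     = ?A \<union> (if last xs < x then {length xs - 1} else {})"
  proof (rule set_eqI)
    fix j
    show "j \<in> {j. Suc j < length (xs@[x]) \<and> (xs@[x]) ! j < (xs@[x]) ! Suc j} \<longleftrightarrow>
      j \<in> ?A \<union> (if last xs < x then {length xs - 1} else {})"
    proof (cases "Suc j < length xs")
      case True then show ?thesis by (auto simp: nth_append)
    next
      case False
      then show ?thesis using ne
        by (cases "j = length xs - 1") (auto simp: nth_append last_conv_nth)
    qed
  qed
  show ?thesis unfolding asc_def eq using fin by (auto simp: card_insert_if)
qed

lemma ascent_seq_snoc:
  assumes ne: "xs \<noteq> []"
  shows "ascent_seq (xs@[x]) \<longleftrightarrow> ascent_seq xs \<and> x \<le> 1 + asc xs"
proof
  assume a: "ascent_seq (xs@[x])"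
  have 0: "xs ! 0 = 0" using a ne by (simp add: ascent_seq_def nth_append)
  have "xs ! i \<le> 1 + asc (take i xs)" if "1 \<le> i" "i < length xs" for i
    using a that unfolding ascent_seq_def
    by (metis (no_types, lifting) length_append_singleton less_SucI nth_append take_append take_eq_Nil2
       append_Nil2 diff_is_0_eq' less_imp_le_nat)
  moreover have "x \<le> 1 + asc xs"
    using a ne unfolding ascent_seq_def
    by (metis One_nat_def Suc_le_eq butlast_snoc length_append_singleton length_greater_0_conv lessI
        nth_append_length butlast_conv_take diff_Suc_1)
  ultimately show "ascent_seq xs \<and> x \<le> 1 + asc xs" using ne 0 by (simp add: ascent_seq_def)
next
  assume a: "ascent_seq xs \<and> x \<le> 1 + asc xs"
  show "ascent_seq (xs@[x])" unfolding ascent_seq_def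
  proof (intro conjI allI impI)
    show "xs @ [x] \<noteq> []" by simp
    show "(xs @ [x]) ! 0 = 0" using a ne by (simp add: ascent_seq_def nth_append)
    fix i assume i: "1 \<le> i \<and> i < length (xs @ [x])"
    show "(xs @ [x]) ! i \<le> 1 + asc (take i (xs @ [x]))"
    proof (cases "i < length xs")
      case True then show ?thesis using a i by (simp add: ascent_seq_def nth_append)
    next
      case False then have "i = length xs" using i by simp
      then show ?thesis using a by simp
    qed
  qed
qed

lemma last_le_asc: "ascent_seq w \<Longrightarrow> last w \<le> asc w"
proof (induction w rule: rev_induct)
  case Nil then show ?case by (simp add: ascent_seq_def)
next
  case (snoc x xs)
  show ?case
  proof (cases "xs = []")
    case True then show ?thesis using snoc.prems by (simp add: ascent_seq_def)
  next
    case False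
    then have "ascent_seq xs" "x \<le> 1 + asc xs" using snoc.prems ascent_seq_snoc by blast+
    then show ?thesis using snoc.IH False by (simp add: asc_snoc)
  qed
qed

definition S :: "nat \<Rightarrow> nat list set" where "S n = {w. ascent_seq w \<and> length w = n}"

lemma S0: "S 0 = {}" by (auto simp: S_def ascent_seq_def)
lemma S1: "S (Suc 0) = {[0]}"
  by (auto simp: S_def ascent_seq_def length_Suc_conv)

lemma S_Suc:
  assumes "1 \<le> m"
  shows "S (Suc m) = (\<lambda>(w,x). w@[x]) ` (SIGMA w:S m. {..Suc (asc w)})"
proof (rule set_eqI iffI)+
  fix w assume w: "w \<in> S (Suc m)"
  then have ne: "butlast w \<noteq> []" using assms by (cases w rule: rev_cases) (auto simp: S_def)
  have e: "w = butlast w @ [last w]" using w by (auto simp: S_def ascent_seq_def)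
  have "ascent_seq (butlast w) \<and> last w \<le> 1 + asc (butlast w)"
    using ascent_seq_snoc[OF ne, of "last w"] w e by (simp add: S_def)
  then have "(butlast w, last w) \<in> (SIGMA w:S m. {..Suc (asc w)})" using w by (simp add: S_def)
  then show "w \<in> (\<lambda>(w,x). w@[x]) ` (SIGMA w:S m. {..Suc (asc w)})" using e by force
next
  fix w assume "w \<in> (\<lambda>(w,x). w@[x]) ` (SIGMA w:S m. {..Suc (asc w)})"
  then obtain xs x where w: "w = xs @ [x]" "xs \<in> S m" "x \<le> Suc (asc xs)" by auto
  then have "xs \<noteq> []" using assms by (auto simp: S_def)
  then show "w \<in> S (Suc m)" using w ascent_seq_snoc by (auto simp: S_def)
qed

lemma finite_S: "finite (S n)"
proof (induction n)
  case 0 then show ?case by (simp add: S0)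
next
  case (Suc n) then show ?case
    by (cases "n = 0") (auto simp: S1 S_Suc)
qed

definition hc :: "'a::comm_ring_1 \<Rightarrow> 'a \<Rightarrow> 'a \<Rightarrow> nat \<Rightarrow> 'a" where
  "hc u v z n = (\<Sum>w\<in>S n. u ^ asc w * v ^ last w * z ^ zeros w)"

lemma hc_Suc:
  fixes u v z :: "'a::comm_ring_1"
  assumes "1 \<le> m"
  shows "hc u v z (Suc m) = (\<Sum>w\<in>S m. \<Sum>x\<le>Suc (asc w).
     u^(asc w + (if last w < x then 1 else 0)) * v^x * z^(zeros w + (if x = 0 then 1 else 0)))"
proof -
  have inj: "inj_on (\<lambda>(w,x). w@[x]) (SIGMA w:S m. {..Suc (asc w)})" by (auto simp: inj_on_def)
  have "hc u v z (Suc m) = (\<Sum>p\<in>(SIGMA w:S m. {..Suc (asc w)}).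
      u ^ asc (fst p @ [snd p]) * v ^ last (fst p @ [snd p]) * z ^ zeros (fst p @ [snd p]))"
    unfolding hc_def S_Suc[OF assms] by (subst sum.reindex[OF inj]) (simp add: case_prod_beta)
  also have "\<dots> = (\<Sum>w\<in>S m. \<Sum>x\<le>Suc (asc w). u ^ asc (w @ [x]) * v ^ x * z ^ zeros (w @ [x]))"
    using sum.Sigma[of "S m" "\<lambda>w. {..Suc (asc w)}" "\<lambda>w x. u ^ asc (w @ [x]) * v ^ x * z ^ zeros (w @ [x])"]
    by (simp add: finite_S case_prod_beta)
  also have "\<dots> = (\<Sum>w\<in>S m. \<Sum>x\<le>Suc (asc w).
     u^(asc w + (if last w < x then 1 else 0)) * v^x * z^(zeros w + (if x = 0 then 1 else 0)))"
  proof (rule sum.cong[OF refl], rule sum.cong[OF refl])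
    fix w x assume "w \<in> S m"
    then have "w \<noteq> []" using assms by (auto simp: S_def)
    then show "u ^ asc (w @ [x]) * v ^ x * z ^ zeros (w @ [x]) =
       u^(asc w + (if last w < x then 1 else 0)) * v^x * z^(zeros w + (if x = 0 then 1 else 0))"
      by (simp add: asc_snoc zeros_def)
  qed
  finally show ?thesis .
qed

lemma hc_rec:
  fixes u v z :: "'a::comm_ring_1"
  assumes "1 \<le> m"
  shows "(v - 1) * hc u v z (Suc m) = (z*(v-1) - v) * hc u 1 z m + v*(1-u) * hc u v z m
     + u*v^2 * hc (u*v) 1 z m"
proof -
  have "(v - 1) * hc u v z (Suc m) = (\<Sum>w\<in>S m. (z*(v-1) - v) * (u^asc w * 1^last w * z^zeros w)
     + v*(1-u) * (u^asc w * v^last w * z^zeros w) + u*v^2 * ((u*v)^asc w * 1^last w * z^zeros w))"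
    unfolding hc_Suc[OF assms] sum_distrib_left[of "v - 1" "\<lambda>w. \<Sum>x\<le>Suc (asc w).
     u^(asc w + (if last w < x then 1 else 0)) * v^x * z^(zeros w + (if x = 0 then 1 else 0))"]
  proof (rule sum.cong[OF refl])
    fix w assume "w \<in> S m"
    then have "last w \<le> asc w" using last_le_asc by (auto simp: S_def)
    then show "(v - 1) * (\<Sum>x\<le>Suc (asc w).
     u^(asc w + (if last w < x then 1 else 0)) * v^x * z^(zeros w + (if x = 0 then 1 else 0))) =
      (z*(v-1) - v) * (u^asc w * 1^last w * z^zeros w)
     + v*(1-u) * (u^asc w * v^last w * z^zeros w) + u*v^2 * ((u*v)^asc w * 1^last w * z^zeros w)"
      by (rule inner)
  qed
  also have "\<dots> = (z*(v-1) - v) * hc u 1 z m + v*(1-u) * hc u v z m + u*v^2 * hc (u*v) 1 z m"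
    by (simp add: hc_def sum.distrib sum_distrib_left)
  finally show ?thesis .
qed

lemma H_nth: "fps_nth (H u v z) n = hc u v z n"
  by (simp add: H_def hc_def S_def)

theorem lemma5:
  fixes u v z :: "'a::comm_ring_1"
  shows "(fps_const (v - 1) - fps_X * fps_const (v * (1 - u))) * H u v z =
    fps_X * fps_const (z * (v - 1))
    + fps_X * fps_const (z * (v - 1) - v) * H u 1 z
    + fps_X * fps_const (u * v ^ 2) * H (u * v) 1 z"
proof (rule fps_ext)
  fix n
  show "fps_nth ((fps_const (v - 1) - fps_X * fps_const (v * (1 - u))) * H u v z) n =
    fps_nth (fps_X * fps_const (z * (v - 1))
    + fps_X * fps_const (z * (v - 1) - v) * H u 1 z
    + fps_X * fps_const (u * v ^ 2) * H (u * v) 1 z) n"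
  proof (cases n)
    case 0 then show ?thesis by (simp add: H_nth hc_def S0)
  next
    case (Suc m)
    show ?thesis
    proof (cases "m = 0")
      case True
      then show ?thesis using Suc
        by (simp add: H_nth hc_def S0 S1 algebra_simps zeros_def asc_def fps_X_mult_nth mult.assoc)
    next
      case False
      then have "1 \<le> m" by simp
      from hc_rec[OF this, of v u z] show ?thesis using Suc False
        by (simp add: H_nth mult.assoc fps_X_mult_nth algebra_simps)
    qed
  qed
qed

end
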